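(* Let $\mathcal{A}$ be a C*-algebra, let $E$ be a Hilbert $\mathcal{A}$-module satisfying property $[\mathbb{H}]$, let $C\in\mathcal{K}(E)$ and put $L:=I-C$. Then: (1) For every $y$ in the norm closure of $\mathrm{Ran}(L)$ there exist sequences $(x_n)$ in $E$ and $(u_n)$ in the closed submodule $\mathrm{Ker}(L)$ such that $Lx_n=x_n-Cx_n\to y$ and, for every $n$, $$\|x_n-u_n\|=\delta_n:=\inf\{\|x_n-u\|:\ u\in \mathrm{Ker}(L)\}.$$ (2) For such sequences, the sequence $\zeta_n:=x_n-u_n$ is bounded in $E$.
   Context: A (right) Hilbert $\mathcal{A}$-module $E$ is a right $\mathcal{A}$-module with an $\mathcal{A}$-valued inner product $\langle\cdot,\cdot\rangle$ (linear in the second variable, $\langle x,ya\rangle=\langle x,y\rangle a$, $\langle y,x\rangle=\langle x,y\rangle^*$, $\langle x,x\rangle\ge 0$ with equality iff $x=0$), complete in the norm $\|x\|=\|\langle x,x\rangle\|^{1/2}$. $\mathcal{L}(E)$ denotes the C*-algebra of adjointable operators on $E$; for $x,y\in E$, $\theta_{x,y}(z)=x\langle y,z\rangle$; $\mathcal{K}(E)$ (the compact operators) is the norm closure in $\mathcal{L}(E)$ of the linear span of $\{\theta_{x,y}:x,y\in E\}$. $E$ satisfies property $[\mathbb{H}]$ if for every bounded sequence $(\zeta_n)$ in $E$ there exist a subsequence $(\zeta_{n_k})$ and $\zeta\in E$ such that $\langle v,\zeta_{n_k}\rangle\to\langle v,\zeta\rangle$ for every $v\in E$. *)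

theory Defs
  imports "HOL-Analysis.Analysis"
begin

class cplx_vector = real_vector +
  fixes scaleC :: "complex \<Rightarrow> 'a \<Rightarrow> 'a"
  assumes scaleC_add_right: "scaleC a (x + y) = scaleC a x + scaleC a y"
    and scaleC_add_left: "scaleC (a + b) x = scaleC a x + scaleC b x"
    and scaleC_scaleC: "scaleC a (scaleC b x) = scaleC (a * b) x"
    and scaleC_one: "scaleC 1 x = x"
    and scaleR_scaleC: "scaleR r x = scaleC (complex_of_real r) x"

class cplx_normed_vector = cplx_vector + real_normed_vector +
  assumes norm_scaleC: "norm (scaleC a x) = cmod a * norm x"

class cstar_algebra = cplx_normed_vector + real_normed_algebra + banach +
  fixes cstar :: "'a \<Rightarrow> 'a"
  assumes scaleC_mult_left: "scaleC c (x * y) = scaleC c x * y"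
    and scaleC_mult_right: "scaleC c (x * y) = x * scaleC c y"
    and cstar_cstar: "cstar (cstar x) = x"
    and cstar_add: "cstar (x + y) = cstar x + cstar y"
    and cstar_scaleC: "cstar (scaleC c x) = scaleC (cnj c) (cstar x)"
    and cstar_mult: "cstar (x * y) = cstar y * cstar x"
    and cstar_identity: "norm (cstar x * x) = (norm x)\<^sup>2"

definition cstar_pos :: "'a::cstar_algebra \<Rightarrow> bool" where
  "cstar_pos a \<longleftrightarrow> (\<exists>b. a = cstar b * b)"

text \<open>E is a complex Banach space (type class banach gives completeness);
  act is the right A-action, inn the A-valued inner product; the norm of E is the
  one induced by the inner product.\<close>
definition hilbert_module ::
  "('e::{cplx_normed_vector,banach} \<Rightarrow> 'a::cstar_algebra \<Rightarrow> 'e) \<Rightarrow> ('e \<Rightarrow> 'e \<Rightarrow> 'a) \<Rightarrow> bool" where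
  "hilbert_module act inn \<longleftrightarrow>
     (\<forall>x y a. act (x + y) a = act x a + act y a) \<and>
     (\<forall>x a b. act x (a + b) = act x a + act x b) \<and>
     (\<forall>x a b. act x (a * b) = act (act x a) b) \<and>
     (\<forall>c x a. act (scaleC c x) a = scaleC c (act x a)) \<and>
     (\<forall>c x a. act x (scaleC c a) = scaleC c (act x a)) \<and>
     (\<forall>x y z. inn x (y + z) = inn x y + inn x z) \<and>
     (\<forall>c x y. inn x (scaleC c y) = scaleC c (inn x y)) \<and>
     (\<forall>x y a. inn x (act y a) = inn x y * a) \<and>
     (\<forall>x y. inn y x = cstar (inn x y)) \<and>
     (\<forall>x. cstar_pos (inn x x)) \<and>
     (\<forall>x. inn x x = 0 \<longleftrightarrow> x = 0) \<and>
     (\<forall>x. norm x = sqrt (norm (inn x x)))"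

definition adjointable :: "('e \<Rightarrow> 'e \<Rightarrow> 'a) \<Rightarrow> ('e \<Rightarrow> 'e) \<Rightarrow> bool" where
  "adjointable inn T \<longleftrightarrow> (\<exists>S. \<forall>x y. inn (T x) y = inn x (S y))"

definition theta :: "('e \<Rightarrow> 'a \<Rightarrow> 'e) \<Rightarrow> ('e \<Rightarrow> 'e \<Rightarrow> 'a) \<Rightarrow> 'e \<Rightarrow> 'e \<Rightarrow> 'e \<Rightarrow> 'e" where
  "theta act inn x y = (\<lambda>z. act x (inn y z))"

definition finite_rank_ops ::
  "('e::cplx_vector \<Rightarrow> 'a \<Rightarrow> 'e) \<Rightarrow> ('e \<Rightarrow> 'e \<Rightarrow> 'a) \<Rightarrow> ('e \<Rightarrow> 'e) set" where
  "finite_rank_ops act inn =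
     {F. \<exists>n c xs ys. F = (\<lambda>z. \<Sum>i<(n::nat). scaleC (c i) (theta act inn (xs i) (ys i) z))}"

definition compact_op ::
  "('e::cplx_normed_vector \<Rightarrow> 'a \<Rightarrow> 'e) \<Rightarrow> ('e \<Rightarrow> 'e \<Rightarrow> 'a::real_normed_vector) \<Rightarrow> ('e \<Rightarrow> 'e) \<Rightarrow> bool" where
  "compact_op act inn T \<longleftrightarrow> adjointable inn T \<and>
     (\<forall>e>0. \<exists>F\<in>finite_rank_ops act inn. onorm (\<lambda>z. T z - F z) < e)"

definition property_H :: "('e::real_normed_vector \<Rightarrow> 'e \<Rightarrow> 'a::real_normed_vector) \<Rightarrow> bool" where
  "property_H inn \<longleftrightarrow>
     (\<forall>\<zeta>::nat \<Rightarrow> 'e. bounded (range \<zeta>) \<longrightarrow>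
        (\<exists>r \<zeta>0. strict_mono r \<and> (\<forall>v. (\<lambda>k. inn v (\<zeta> (r k))) \<longlonglongrightarrow> inn v \<zeta>0)))"

end

theory Submission
  imports Defs
begin


context cplx_vector begin
lemma scaleC_zero_left[simp]: "scaleC 0 x = 0"
proof -
  have "scaleC 0 x = scaleC (0+0) x" by simp
  also have "\<dots> = scaleC 0 x + scaleC 0 x" by (rule scaleC_add_left)
  finally show ?thesis by simp
qed
lemma scaleC_zero_right[simp]: "scaleC a 0 = 0"
proof -
  have "scaleC a 0 = scaleC a (0+0)" by simp
  also have "\<dots> = scaleC a 0 + scaleC a 0" by (rule scaleC_add_right)
  finally show ?thesis by simp
qed
lemma scaleC_minus_left: "scaleC (- a) x = - scaleC a x"
  using scaleC_add_left[of a "-a" x] by (intro minus_unique[symmetric]) simp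
lemma scaleC_minus_right: "scaleC a (- x) = - scaleC a x"
  using scaleC_add_right[of a x "-x"] by (intro minus_unique[symmetric]) simp
lemma scaleC_diff_right: "scaleC a (x - y) = scaleC a x - scaleC a y"
  using scaleC_add_right[of a x "-y"] by (simp add: scaleC_minus_right)
lemma scaleC_diff_left: "scaleC (a - b) x = scaleC a x - scaleC b x"
  using scaleC_add_left[of a "-b" x] by (simp add: scaleC_minus_left)
end

context cstar_algebra begin
lemma cstar_zero[simp]: "cstar 0 = 0"
  using cstar_add[of 0 0] by simp
lemma cstar_minus: "cstar (- x) = - cstar x"
  using cstar_add[of x "-x"] by (intro minus_unique[symmetric]) simp
lemma cstar_diff: "cstar (x - y) = cstar x - cstar y"
  using cstar_add[of x "-y"] by (simp add: cstar_minus)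
lemma norm_cstar_le: "norm x \<le> norm (cstar x)"
proof (cases "x = 0")
  case False
  have "(norm x)^2 \<le> norm (cstar x) * norm x"
    using cstar_identity[of x] norm_mult_ineq[of "cstar x" x] by simp
  then show ?thesis using False by (simp add: power2_eq_square)
qed simp
lemma norm_cstar[simp]: "norm (cstar x) = norm x"
  using norm_cstar_le[of x] norm_cstar_le[of "cstar x"] by (simp add: cstar_cstar)
end



locale hm =
  fixes act :: "'e::{cplx_normed_vector,banach} \<Rightarrow> 'a::cstar_algebra \<Rightarrow> 'e"
    and inn :: "'e \<Rightarrow> 'e \<Rightarrow> 'a"
  assumes H: "hilbert_module act inn"
begin

lemmas HH = H[unfolded hilbert_module_def]

lemma act_add_left: "act (x + y) a = act x a + act y a" using HH[THEN conjunct1] by blast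
lemma act_add_right: "act x (a + b) = act x a + act x b" using HH[THEN conjunct2, THEN conjunct1] by blast
lemma act_scaleC_right: "act x (scaleC c a) = scaleC c (act x a)" using HH[THEN conjunct2, THEN conjunct2, THEN conjunct2, THEN conjunct2, THEN conjunct1] by blast
lemma inn_add_right: "inn x (y + z) = inn x y + inn x z" using HH[THEN conjunct2, THEN conjunct2, THEN conjunct2, THEN conjunct2, THEN conjunct2, THEN conjunct1] by blast
lemma inn_scaleC_right: "inn x (scaleC c y) = scaleC c (inn x y)" using HH[THEN conjunct2, THEN conjunct2, THEN conjunct2, THEN conjunct2, THEN conjunct2, THEN conjunct2, THEN conjunct1] by blast
lemma inn_act_right: "inn x (act y a) = inn x y * a" using HH[THEN conjunct2, THEN conjunct2, THEN conjunct2, THEN conjunct2, THEN conjunct2, THEN conjunct2, THEN conjunct2, THEN conjunct1] by blast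
lemma inn_sym: "inn y x = cstar (inn x y)" using HH[THEN conjunct2, THEN conjunct2, THEN conjunct2, THEN conjunct2, THEN conjunct2, THEN conjunct2, THEN conjunct2, THEN conjunct2, THEN conjunct1] by blast
lemma inn_self_eq0: "inn x x = 0 \<longleftrightarrow> x = 0" using HH[THEN conjunct2, THEN conjunct2, THEN conjunct2, THEN conjunct2, THEN conjunct2, THEN conjunct2, THEN conjunct2, THEN conjunct2, THEN conjunct2, THEN conjunct2, THEN conjunct1] by blast
lemma norm_E: "norm x = sqrt (norm (inn x x))" using HH[THEN conjunct2, THEN conjunct2, THEN conjunct2, THEN conjunct2, THEN conjunct2, THEN conjunct2, THEN conjunct2, THEN conjunct2, THEN conjunct2, THEN conjunct2, THEN conjunct2] by blast

lemma norm_inn_self: "norm (inn x x) = (norm x)^2"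
  by (simp add: norm_E)

lemma inn_zero_right[simp]: "inn x 0 = 0"
  using inn_add_right[of x 0 0] by simp
lemma inn_minus_right: "inn x (- y) = - inn x y"
  using inn_add_right[of x y "-y"] by (intro minus_unique[symmetric]) simp
lemma inn_diff_right: "inn x (y - z) = inn x y - inn x z"
  using inn_add_right[of x y "-z"] by (simp add: inn_minus_right)
lemma inn_add_left: "inn (x + y) z = inn x z + inn y z"
  by (metis inn_sym inn_add_right cstar_add)
lemma inn_diff_left: "inn (x - y) z = inn x z - inn y z"
  by (metis inn_sym inn_diff_right cstar_diff)
lemma inn_zero_left[simp]: "inn 0 x = 0"
  by (metis inn_sym inn_zero_right cstar_zero)
lemma inn_scaleC_left: "inn (scaleC c x) z = scaleC (cnj c) (inn x z)"
  by (metis inn_sym inn_scaleC_right cstar_scaleC)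
lemma inn_scaleR_right: "inn x (scaleR r y) = scaleR r (inn x y)"
  by (simp add: scaleR_scaleC inn_scaleC_right)
lemma inn_scaleR_left: "inn (scaleR r x) y = scaleR r (inn x y)"
  by (simp add: scaleR_scaleC inn_scaleC_left)

lemma inn_ext: assumes "\<And>v. inn p v = inn q v" shows "p = q"
proof -
  have "inn (p - q) (p - q) = 0" using assms[of "p - q"] by (simp add: inn_diff_left)
  thus ?thesis by (simp add: inn_self_eq0)
qed

lemma inn_ext2: assumes "\<And>v. inn v p = inn v q" shows "p = q"
  by (rule inn_ext) (metis assms inn_sym)

lemma expand: "inn (x + scaleC c y) (x + scaleC c y) =
   inn x x + scaleC c (inn x y) + scaleC (cnj c) (inn y x) + scaleC (cnj c) (scaleC c (inn y y))"
  by (simp add: inn_add_left inn_add_right inn_scaleC_left inn_scaleC_right scaleC_add_right scaleC_scaleC mult.commute algebra_simps)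

lemma polar: "scaleC 4 (inn x y) =
   (inn (x + scaleC 1 y) (x + scaleC 1 y) - inn (x + scaleC (-1) y) (x + scaleC (-1) y))
   + scaleC (-\<i>) (inn (x + scaleC \<i> y) (x + scaleC \<i> y) - inn (x + scaleC (-\<i>) y) (x + scaleC (-\<i>) y))"
proof -
  define a where "a = inn x y"
  define b where "b = inn y x"
  have e: "inn (x + scaleC c y) (x + scaleC c y) - inn (x + scaleC (-c) y) (x + scaleC (-c) y)
     = scaleC (2*c) a + scaleC (2 * cnj c) b" for c
    unfolding expand a_def b_def
    by (simp add: scaleC_scaleC scaleC_minus_left scaleC_minus_right scaleC_add_left[symmetric] algebra_simps)
  have e1: "scaleC (-\<i>) (scaleC (2*\<i>) a + scaleC (2*cnj \<i>) b) = scaleC 2 a + scaleC (-2) b"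
  proof -
    have n: "\<i> * (2 * \<i>) = (-2::complex)" by (simp add: mult.left_commute)
    show ?thesis by (simp add: scaleC_add_right scaleC_scaleC n)
  qed
  have e2: "scaleC 2 a + scaleC 2 b + (scaleC 2 a + scaleC (-2) b) = scaleC 4 a"
  proof -
    have "scaleC 2 a + scaleC 2 b + (scaleC 2 a + scaleC (-2) b) = (scaleC 2 a + scaleC 2 a) + (scaleC 2 b + scaleC (-2) b)"
      by (simp add: algebra_simps)
    also have "\<dots> = scaleC 4 a + scaleC 0 b" by (simp only: scaleC_add_left[symmetric]) simp
    finally show ?thesis by simp
  qed
  show ?thesis
    using e[of 1] e[of \<i>] e1 e2 by (simp add: a_def b_def)
qed

lemma sq_bound: assumes "cmod c = 1" shows "norm (inn (x + scaleC c y) (x + scaleC c y)) \<le> (norm x + norm y)^2"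
proof -
  have "norm (x + scaleC c y) \<le> norm x + norm y"
    using norm_triangle_ineq[of x "scaleC c y"] by (simp add: norm_scaleC assms)
  then show ?thesis by (simp add: norm_inn_self power_mono)
qed

lemma inn_bound1: "norm (inn x y) \<le> (norm x + norm y)^2"
proof -
  let ?P = "\<lambda>c. inn (x + scaleC c y) (x + scaleC c y)"
  have "4 * norm (inn x y) = norm (scaleC 4 (inn x y))" by (simp add: norm_scaleC)
  also have "\<dots> = norm ((?P 1 - ?P (-1)) + scaleC (-\<i>) (?P \<i> - ?P (-\<i>)))"
    by (simp only: polar)
  also have "\<dots> \<le> norm (?P 1) + norm (?P (-1)) + (norm (?P \<i>) + norm (?P (-\<i>)))"
  proof -
    have "norm ((?P 1 - ?P (-1)) + scaleC (-\<i>) (?P \<i> - ?P (-\<i>))) \<le> norm (?P 1 - ?P (-1)) + norm (scaleC (-\<i>) (?P \<i> - ?P (-\<i>)))"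
      by (rule norm_triangle_ineq)
    also have "\<dots> \<le> norm (?P 1) + norm (?P (-1)) + (norm (?P \<i>) + norm (?P (-\<i>)))"
      by (intro add_mono norm_triangle_ineq4) (simp add: norm_scaleC norm_triangle_ineq4)
    finally show ?thesis .
  qed
  also have "\<dots> \<le> 4 * (norm x + norm y)^2"
    using sq_bound[of 1 x y] sq_bound[of "-1" x y] sq_bound[of "\<i>" x y] sq_bound[of "-\<i>" x y] by simp
  finally show ?thesis by simp
qed

lemma inn_bound: "norm (inn x y) \<le> 4 * norm x * norm y"
proof (cases "x = 0 \<or> y = 0")
  case True then show ?thesis by auto
next
  case False
  then have nx: "norm x > 0" and ny: "norm y > 0" by auto
  define t where "t = sqrt (norm y / norm x)"
  have t: "t > 0" using nx ny by (simp add: t_def)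
  have tt: "t * t = norm y / norm x" using nx ny by (simp add: t_def)
  have "inn (scaleR t x) (scaleR (1/t) y) = inn x y"
    using t by (simp add: inn_scaleR_left inn_scaleR_right)
  then have "norm (inn x y) \<le> (norm (scaleR t x) + norm (scaleR (1/t) y))^2"
    by (metis inn_bound1)
  also have "\<dots> = (t * norm x + norm y / t)^2" using t by simp
  also have "\<dots> = t*t*norm x * norm x + 2 * norm x * norm y + norm y * norm y / (t*t)"
    using t by (simp add: power2_eq_square field_simps)
  also have "\<dots> = 4 * norm x * norm y"
    unfolding tt using nx ny by (simp add: field_simps)
  finally show ?thesis .
qed

end


context hm begin

lemma act_zero_right[simp]: "act x 0 = 0"
  using act_add_right[of x 0 0] by simp
lemma act_minus_right: "act x (- a) = - act x a"
  using act_add_right[of x a "-a"] by (intro minus_unique[symmetric]) simp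
lemma act_diff_right: "act x (a - b) = act x a - act x b"
  using act_add_right[of x a "-b"] by (simp add: act_minus_right)
lemma act_scaleR_right: "act x (scaleR r a) = scaleR r (act x a)"
  by (simp add: scaleR_scaleC act_scaleC_right)

lemma act_bound: "norm (act x a) \<le> 4 * norm x * norm a"
proof (cases "act x a = 0")
  case False
  then have p: "norm (act x a) > 0" by simp
  have "(norm (act x a))^2 = norm (inn (act x a) (act x a))" by (simp add: norm_inn_self)
  also have "\<dots> = norm (inn (act x a) x * a)" by (simp add: inn_act_right)
  also have "\<dots> \<le> norm (inn (act x a) x) * norm a" by (rule norm_mult_ineq)
  also have "\<dots> \<le> (4 * norm (act x a) * norm x) * norm a"
    by (intro mult_right_mono inn_bound) simp
  finally have "norm (act x a) * norm (act x a) \<le> norm (act x a) * (4 * norm x * norm a)"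
    by (simp add: power2_eq_square mult_ac)
  then show ?thesis using p by simp
qed simp

lemma bl_act: "bounded_linear (act x)"
proof (rule bounded_linear_intro[where K="4 * norm x"])
  show "norm (act x a) \<le> norm a * (4 * norm x)" for a
    using act_bound[of x a] by (simp add: mult_ac)
qed (auto simp: act_add_right act_scaleR_right)

lemma bl_inn_right: "bounded_linear (inn y)"
proof (rule bounded_linear_intro[where K="4 * norm y"])
  show "norm (inn y x) \<le> norm x * (4 * norm y)" for x
    using inn_bound[of y x] by (simp add: mult_ac)
qed (auto simp: inn_add_right inn_scaleR_right)

lemma bl_inn_left: "bounded_linear (\<lambda>x. inn x y)"
proof (rule bounded_linear_intro[where K="4 * norm y"])
  show "norm (inn x y) \<le> norm x * (4 * norm y)" for x
    using inn_bound[of x y] by (simp add: mult_ac)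
qed (auto simp: inn_add_left inn_scaleR_left)

lemma tendsto_inn_right: "(f \<longlongrightarrow> z) F \<Longrightarrow> ((\<lambda>n. inn v (f n)) \<longlongrightarrow> inn v z) F"
  using bounded_linear.tendsto[OF bl_inn_right] .
lemma tendsto_inn_left: "(f \<longlongrightarrow> z) F \<Longrightarrow> ((\<lambda>n. inn (f n) v) \<longlongrightarrow> inn z v) F"
  using bounded_linear.tendsto[OF bl_inn_left] .

end

locale hm_op = hm act inn for act :: "'e::{cplx_normed_vector,banach} \<Rightarrow> 'a::cstar_algebra \<Rightarrow> 'e"
    and inn :: "'e \<Rightarrow> 'e \<Rightarrow> 'a" +
  fixes C S :: "'e \<Rightarrow> 'e"
  assumes adj: "inn (C x) y = inn x (S y)"
begin

lemma C_add: "C (x + y) = C x + C y"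
  by (rule inn_ext) (simp add: adj inn_add_left)
lemma C_scaleC: "C (scaleC c x) = scaleC c (C x)"
  by (rule inn_ext) (simp add: adj inn_scaleC_left)
lemma C_scaleR: "C (scaleR r x) = scaleR r (C x)"
  by (simp add: scaleR_scaleC C_scaleC)
lemma C_zero[simp]: "C 0 = 0"
  using C_add[of 0 0] by simp
lemma C_minus: "C (- x) = - C x"
  using C_add[of x "-x"] by (intro minus_unique[symmetric]) simp
lemma C_diff: "C (x - y) = C x - C y"
  using C_add[of x "-y"] by (simp add: C_minus)

end


context hm_op begin

lemma C_bounded: "\<exists>M. \<forall>x. norm (C x) \<le> M * norm x"
proof -
  define A where "A m = {y. \<forall>x. norm x \<le> 1 \<longrightarrow> norm (inn (C x) y) \<le> real m}" for m :: nat
  have clA: "closed (A m)" for m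
  proof -
    have "A m = (\<Inter>x\<in>{x. norm x \<le> 1}. {y. norm (inn (C x) y) \<le> real m})"
      unfolding A_def by auto
    moreover have "closed {y. norm (inn (C x) y) \<le> real m}" for x
      by (intro closed_Collect_le continuous_on_norm continuous_on_const
            bounded_linear.continuous_on[OF bl_inn_right] continuous_on_id)
    ultimately show ?thesis by auto
  qed
  have unA: "(\<Union>m. A m) = UNIV"
  proof (rule UNIV_eq_I[symmetric])
    fix y
    obtain m :: nat where m: "4 * norm (S y) \<le> real m" using real_arch_simple by blast
    have "y \<in> A m"
      unfolding A_def
    proof (safe)
      fix x :: 'e assume x: "norm x \<le> 1"
      have "norm (inn (C x) y) = norm (inn x (S y))" by (simp add: adj)
      also have "\<dots> \<le> 4 * norm x * norm (S y)" by (rule inn_bound)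
      also have "\<dots> \<le> 4 * 1 * norm (S y)" by (intro mult_right_mono mult_left_mono x) auto
      finally show "norm (inn (C x) y) \<le> real m" using m by simp
    qed
    then show "y \<in> (\<Union>m. A m)" by blast
  qed
  have "\<exists>m. interior (A m) \<noteq> {}"
  proof (rule ccontr)
    assume "\<nexists>m. interior (A m) \<noteq> {}"
    then have "euclidean interior_of \<Union>(range A) = {}"
      by (intro Baire_category_alt)
         (auto simp: completely_metrizable_space_euclidean clA closed_closedin[symmetric])
    then show False using unA by simp
  qed
  then obtain m y0 where "y0 \<in> interior (A m)" by blast
  then obtain r where r: "r > 0" "ball y0 r \<subseteq> A m"
    by (meson open_contains_ball open_interior interior_subset subset_trans)
  have bnd1: "norm (C x) \<le> 4 * real m / r" if x: "norm x \<le> 1" for x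
  proof (cases "C x = 0")
    case True then show ?thesis using r by simp
  next
    case False
    then have p: "norm (C x) > 0" by simp
    define z where "z = scaleR (r / (2 * norm (C x))) (C x)"
    have nz: "norm z = r / 2" using p r by (simp add: z_def)
    have "y0 + z \<in> ball y0 r" using nz r by (simp add: dist_norm)
    then have h1: "norm (inn (C x) (y0 + z)) \<le> real m" using r x unfolding A_def by blast
    have "y0 \<in> ball y0 r" using r by simp
    then have h2: "norm (inn (C x) y0) \<le> real m" using r x unfolding A_def by blast
    have "inn (C x) z = inn (C x) (y0 + z) - inn (C x) y0" by (simp add: inn_add_right)
    then have "norm (inn (C x) z) \<le> 2 * real m"
      using h1 h2 norm_triangle_ineq4[of "inn (C x) (y0 + z)" "inn (C x) y0"] by simp
    moreover have "norm (inn (C x) z) = r * norm (C x) / 2"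
      using p r by (simp add: z_def inn_scaleR_right norm_inn_self power2_eq_square field_simps)
    ultimately have "r * norm (C x) \<le> 4 * real m" by simp
    then show ?thesis using r by (simp add: field_simps mult.commute)
  qed
  have "norm (C x) \<le> (4 * real m / r) * norm x" for x
  proof (cases "x = 0")
    case False
    then have p: "norm x > 0" by simp
    have "norm (C (scaleR (1 / norm x) x)) \<le> 4 * real m / r"
      by (rule bnd1) (use p in simp)
    then have "norm (C x) / norm x \<le> 4 * real m / r" using p by (simp add: C_scaleR)
    then show ?thesis using p by (simp add: field_simps)
  qed simp
  then show ?thesis by blast
qed

lemma bl_C: "bounded_linear C"
proof -
  obtain M where M: "\<And>x. norm (C x) \<le> M * norm x" using C_bounded by blast
  show ?thesis
    by (rule bounded_linear_intro[where K=M]) (auto simp: C_add C_scaleR M mult.commute)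
qed

end


lemma bl_scaleC: "bounded_linear (\<lambda>x::'b::cplx_normed_vector. scaleC c x)"
proof (rule bounded_linear_intro[where K="cmod c"])
  show "scaleC c (scaleR r x) = scaleR r (scaleC c x)" for r and x :: 'b
    by (simp add: scaleR_scaleC scaleC_scaleC mult.commute)
qed (auto simp: scaleC_add_right norm_scaleC mult.commute)

lemma aux_div: "(X::real) \<noteq> 0 \<Longrightarrow> e / (3 * X) * X = e / 3" by simp

context hm begin

lemma finite_rank_unfold:
  assumes "F \<in> finite_rank_ops act inn"
  obtains n c xs ys where "F = (\<lambda>z. \<Sum>i<(n::nat). scaleC (c i) (act (xs i) (inn (ys i) z)))"
  using assms unfolding finite_rank_ops_def theta_def by blast

lemma bl_finite_rank: assumes "F \<in> finite_rank_ops act inn" shows "bounded_linear F"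
proof -
  obtain n c xs ys where F: "F = (\<lambda>z. \<Sum>i<(n::nat). scaleC (c i) (act (xs i) (inn (ys i) z)))"
    using finite_rank_unfold[OF assms] by blast
  show ?thesis unfolding F
    by (intro bounded_linear_sum)
       (rule bounded_linear_compose[OF bl_scaleC bounded_linear_compose[OF bl_act bl_inn_right]])
qed

lemma weak_finite_rank:
  assumes "F \<in> finite_rank_ops act inn" and "\<And>v. (\<lambda>k. inn v (w k)) \<longlonglongrightarrow> inn v w0"
  shows "(\<lambda>k. F (w k)) \<longlonglongrightarrow> F w0"
proof -
  obtain n c xs ys where F: "F = (\<lambda>z. \<Sum>i<(n::nat). scaleC (c i) (act (xs i) (inn (ys i) z)))"
    using finite_rank_unfold[OF assms(1)] by blast
  show ?thesis unfolding F
    by (intro tendsto_sum)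
       (rule bounded_linear.tendsto[OF bl_scaleC], rule bounded_linear.tendsto[OF bl_act], rule assms(2))
qed

end

context hm_op begin

lemma key:
  fixes w :: "nat \<Rightarrow> 'e"
  assumes cC: "compact_op act inn C" and pH: "property_H inn" and bw: "bounded (range w)"
  shows "\<exists>r w0. strict_mono r \<and> (\<lambda>k. C (w (r k))) \<longlonglongrightarrow> C w0"
proof -
  obtain r w0 where r: "strict_mono r" and wk: "\<And>v. (\<lambda>k. inn v (w (r k))) \<longlonglongrightarrow> inn v w0"
    using pH bw unfolding property_H_def by meson
  obtain B where B: "\<And>n. norm (w n) \<le> B" using bw unfolding bounded_iff by blast
  have B0: "B \<ge> 0" using B[of 0] norm_ge_zero[of "w 0"] by linarith
  have "(\<lambda>k. C (w (r k))) \<longlonglongrightarrow> C w0"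
  proof (rule LIMSEQ_I)
    fix e :: real assume e: "e > 0"
    define d where "d = e / (3 * (B + norm w0 + 1))"
    have "3 * (B + norm w0 + 1) > 0" using B0 by (simp add: add_nonneg_pos)
    then have d: "d > 0" using e unfolding d_def by (rule divide_pos_pos[rotated])
    obtain F where F: "F \<in> finite_rank_ops act inn" and oF: "onorm (\<lambda>z. C z - F z) < d"
      using cC d unfolding compact_op_def by blast
    have blD: "bounded_linear (\<lambda>z. C z - F z)"
      by (intro bounded_linear_sub bl_C bl_finite_rank F)
    have D: "norm (C z - F z) \<le> d * norm z" for z
      using onorm[OF blD, of z] oF by (meson le_less_trans less_imp_le mult_right_mono norm_ge_zero order.trans)
    have "(\<lambda>k. F (w (r k))) \<longlonglongrightarrow> F w0" by (rule weak_finite_rank[OF F wk])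
    then obtain N where N: "\<And>k. k \<ge> N \<Longrightarrow> norm (F (w (r k)) - F w0) < e / 3"
      using e by (metis LIMSEQ_D divide_pos_pos zero_less_numeral)
    have dd: "d * B + d * norm w0 < e / 3"
    proof -
      have "d * (B + norm w0) < d * (B + norm w0 + 1)" using d by simp
      also have "\<dots> = e / 3"
      proof -
        have "B + norm w0 + 1 \<noteq> 0" using B0 norm_ge_zero[of w0] by linarith
        then show ?thesis unfolding d_def by (rule aux_div)
      qed
      finally show ?thesis by (simp add: algebra_simps)
    qed
    show "\<exists>N. \<forall>k\<ge>N. norm (C (w (r k)) - C w0) < e"
    proof (intro exI allI impI)
      fix k assume k: "k \<ge> N"
      have tri: "norm (a + b - c) \<le> norm a + norm b + norm c" for a b c :: 'e
        using norm_triangle_ineq4[of "a + b" c] norm_triangle_ineq[of a b] by linarith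
      have "C (w (r k)) - C w0 = (C (w (r k)) - F (w (r k))) + (F (w (r k)) - F w0) - (C w0 - F w0)"
        by simp
      then have "norm (C (w (r k)) - C w0) \<le> norm (C (w (r k)) - F (w (r k))) + norm (F (w (r k)) - F w0) + norm (C w0 - F w0)"
        using tri by metis
      also have "\<dots> < d * B + e / 3 + d * norm w0"
        using D[of "w (r k)"] D[of w0] N[OF k] mult_left_mono[OF B[of "r k"], of d] d by linarith
      also have "\<dots> < e" using dd e by linarith
      finally show "norm (C (w (r k)) - C w0) < e" .
    qed
  qed
  then show ?thesis using r by blast
qed

end


locale hm_main = hm_op act inn C S
  for act :: "'e::{cplx_normed_vector,banach} \<Rightarrow> 'a::cstar_algebra \<Rightarrow> 'e"
    and inn :: "'e \<Rightarrow> 'e \<Rightarrow> 'a" and C S +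
  assumes cC: "compact_op act inn C" and pH: "property_H inn"
begin

lemma C_tendsto: "f \<longlonglongrightarrow> u \<Longrightarrow> (\<lambda>k. C (f k)) \<longlonglongrightarrow> C u"
  using bounded_linear.tendsto[OF bl_C] .

lemma sub_conv:
  fixes w :: "nat \<Rightarrow> 'e"
  assumes bw: "bounded (range w)" and l: "(\<lambda>n. w n - C (w n)) \<longlonglongrightarrow> l"
  shows "\<exists>r u. strict_mono r \<and> (\<lambda>k. w (r k)) \<longlonglongrightarrow> u \<and> u - C u = l"
proof -
  obtain r w0 where r: "strict_mono r" and c: "(\<lambda>k. C (w (r k))) \<longlonglongrightarrow> C w0"
    using key[OF cC pH bw] by blast
  have l': "(\<lambda>k. w (r k) - C (w (r k))) \<longlonglongrightarrow> l"
    using LIMSEQ_subseq_LIMSEQ[OF l r] by (simp add: o_def)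
  have "(\<lambda>k. (w (r k) - C (w (r k))) + C (w (r k))) \<longlonglongrightarrow> l + C w0"
    by (intro tendsto_add l' c)
  then have u: "(\<lambda>k. w (r k)) \<longlonglongrightarrow> l + C w0" by simp
  have "(\<lambda>k. C (w (r k))) \<longlonglongrightarrow> C (l + C w0)" by (rule C_tendsto[OF u])
  then have "C (l + C w0) = C w0" using c LIMSEQ_unique by blast
  then have "(l + C w0) - C (l + C w0) = l" by simp
  then show ?thesis using r u by blast
qed

lemma attain: "\<exists>u. u - C u = 0 \<and> norm (x - u) = (INF v\<in>{v. v - C v = 0}. norm (x - v))"
proof -
  define K where "K = {v. v - C v = 0}"
  define d where "d = (INF v\<in>K. norm (x - v))"
  have K0: "0 \<in> K" by (simp add: K_def)
  have bdd: "bdd_below ((\<lambda>v. norm (x - v)) ` K)" by (rule bdd_belowI[of _ 0]) auto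
  have "\<forall>k::nat. \<exists>v. v \<in> K \<and> norm (x - v) < d + inverse (real (Suc k))"
  proof
    fix k :: nat
    have "d < d + inverse (real (Suc k))" by simp
    then show "\<exists>v. v \<in> K \<and> norm (x - v) < d + inverse (real (Suc k))"
      unfolding d_def using cINF_less_iff[of K "\<lambda>v. norm (x - v)"] K0 bdd by blast
  qed
  then obtain v where vK: "\<And>k. v k \<in> K" and vl: "\<And>k. norm (x - v k) < d + inverse (real (Suc k))"
    by metis
  have dle: "d \<le> norm (x - v k)" for k
    unfolding d_def by (rule cINF_lower[OF bdd vK])
  have bv: "bounded (range v)"
    unfolding bounded_iff
  proof (intro exI ballI)
    fix z assume "z \<in> range v"
    then obtain k where z: "z = v k" by blast
    have "norm z \<le> norm x + norm (x - z)"
      using norm_triangle_ineq4[of x "x - z"] by simp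
    also have "\<dots> \<le> norm x + (d + 1)"
    proof -
      have "inverse (real (Suc k)) \<le> 1" by (simp add: field_simps)
      then show ?thesis using vl[of k] unfolding z by linarith
    qed
    finally show "norm z \<le> norm x + (d + 1)" .
  qed
  have "(\<lambda>n. v n - C (v n)) \<longlonglongrightarrow> 0" using vK by (simp add: K_def)
  then obtain r u where r: "strict_mono r" and vu: "(\<lambda>k. v (r k)) \<longlonglongrightarrow> u" and uK: "u - C u = 0"
    using sub_conv[OF bv] by blast
  have t1: "(\<lambda>k. norm (x - v (r k))) \<longlonglongrightarrow> norm (x - u)"
    by (intro tendsto_norm tendsto_diff tendsto_const vu)
  have inv: "(\<lambda>k. inverse (real (Suc (r k)))) \<longlonglongrightarrow> 0"
    using LIMSEQ_subseq_LIMSEQ[OF LIMSEQ_inverse_real_of_nat r] by (simp add: o_def)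
  have t2: "(\<lambda>k. norm (x - v (r k))) \<longlonglongrightarrow> d"
  proof (rule tendsto_sandwich[where f="\<lambda>k. d" and h="\<lambda>k. d + inverse (real (Suc (r k)))"])
    show "((\<lambda>k. d + inverse (real (Suc (r k)))) \<longlonglongrightarrow> d)"
      using tendsto_add[OF tendsto_const inv, of d] by simp
    show "eventually (\<lambda>k. d \<le> norm (x - v (r k))) sequentially" by (simp add: dle)
    show "eventually (\<lambda>k. norm (x - v (r k)) \<le> d + inverse (real (Suc (r k)))) sequentially"
      using vl by (simp add: less_imp_le)
    show "((\<lambda>k. d) \<longlongrightarrow> d) sequentially" by simp
  qed
  have "norm (x - u) = d" using t1 t2 LIMSEQ_unique by blast
  then show ?thesis using uK unfolding d_def K_def by blast
qed

lemma part1: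
  assumes "y \<in> closure (range (\<lambda>x. x - C x))"
  shows "\<exists>x u. (\<forall>n. u n \<in> {v. v - C v = 0}) \<and>
                  (\<lambda>n. x n - C (x n)) \<longlonglongrightarrow> y \<and>
                  (\<forall>n. norm (x n - u n) = (INF v\<in>{v. v - C v = 0}. norm (x n - v)))"
proof -
  obtain z where z: "\<And>n. z n \<in> range (\<lambda>x. x - C x)" and zl: "z \<longlonglongrightarrow> y"
    using assms unfolding closure_sequential by blast
  have "\<forall>n. \<exists>x'. z n = x' - C x'" using z by blast
  from choice[OF this] obtain x where x: "\<forall>n. z n = x n - C (x n)" by blast
  have "\<forall>n. \<exists>u'. u' - C u' = 0 \<and> norm (x n - u') = (INF v\<in>{v. v - C v = 0}. norm (x n - v))"
    using attain by blast
  from choice[OF this] obtain u where u: "\<forall>n. u n - C (u n) = 0 \<and> norm (x n - u n) = (INF v\<in>{v. v - C v = 0}. norm (x n - v))"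
    by blast
  have "z = (\<lambda>n. x n - C (x n))" using x by auto
  then have "(\<lambda>n. x n - C (x n)) \<longlonglongrightarrow> y" using zl by simp
  then show ?thesis using u by blast
qed

end


context hm_main begin

lemma part2:
  fixes x u :: "nat \<Rightarrow> 'e"
  assumes uK: "\<forall>n. u n \<in> {v. v - C v = 0}"
    and xl: "(\<lambda>n. x n - C (x n)) \<longlonglongrightarrow> y"
    and dist: "\<forall>n. norm (x n - u n) = (INF v\<in>{v. v - C v = 0}. norm (x n - v))"
  shows "bounded (range (\<lambda>n. x n - u n))"
proof (rule ccontr)
  assume nb: "\<not> bounded (range (\<lambda>n. x n - u n))"
  define z where "z n = x n - u n" for n
  have Lz: "z n - C (z n) = x n - C (x n)" for n
    using uK by (simp add: z_def C_diff algebra_simps)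
  have zl: "(\<lambda>n. z n - C (z n)) \<longlonglongrightarrow> y" using xl by (simp add: Lz)
  have Kz: "norm (z n) \<le> norm (z n - v)" if v: "v - C v = 0" for n v
  proof -
    have "u n + v \<in> {v. v - C v = 0}" using uK v by (simp add: C_add algebra_simps)
    moreover have "bdd_below ((\<lambda>v. norm (x n - v)) ` {v. v - C v = 0})"
      by (rule bdd_belowI[of _ 0]) auto
    ultimately have "(INF v\<in>{v. v - C v = 0}. norm (x n - v)) \<le> norm (x n - (u n + v))"
      by (rule cINF_lower[rotated])
    then show ?thesis using dist by (simp add: z_def algebra_simps)
  qed
  obtain B where B0: "B > 0" and B: "\<And>n. norm (z n - C (z n)) \<le> B"
    using convergent_imp_Bseq[of "\<lambda>n. z n - C (z n)"] zl by (auto simp: convergent_def elim!: BseqE)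
  have "\<forall>k::nat. \<exists>n. norm (z n) > real (Suc k)"
    using nb unfolding bounded_iff z_def by (auto simp: not_le)
  from choice[OF this] obtain m where m: "\<And>k. norm (z (m k)) > real (Suc k)" by blast
  define w where "w k = scaleR (1 / norm (z (m k))) (z (m k))" for k
  have pz: "norm (z (m k)) > 0" for k using m[of k] by (smt (verit) of_nat_0_le_iff)
  have nw: "norm (w k) = 1" for k using pz[of k] by (simp add: w_def)
  have bw: "bounded (range w)" unfolding bounded_iff using nw by auto
  have Lw: "w k - C (w k) = scaleR (1 / norm (z (m k))) (z (m k) - C (z (m k)))" for k
    by (simp add: w_def C_scaleR scaleR_diff_right)
  have "(\<lambda>k. w k - C (w k)) \<longlonglongrightarrow> 0"
  proof (rule Lim_null_comparison)
    show "eventually (\<lambda>k. norm (w k - C (w k)) \<le> B * inverse (real (Suc k))) sequentially"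
    proof (intro always_eventually allI)
      fix k
      have "norm (w k - C (w k)) = norm (z (m k) - C (z (m k))) / norm (z (m k))"
        using pz[of k] by (simp add: Lw)
      also have "\<dots> \<le> B / norm (z (m k))"
        using B[of "m k"] pz[of k] by (simp add: divide_right_mono)
      also have "\<dots> \<le> B / real (Suc k)"
        using m[of k] B0 pz[of k] by (intro divide_left_mono) (auto intro!: mult_pos_pos)
      finally show "norm (w k - C (w k)) \<le> B * inverse (real (Suc k))" by (simp add: field_simps)
    qed
    show "(\<lambda>k. B * inverse (real (Suc k))) \<longlonglongrightarrow> 0"
      using tendsto_mult[OF tendsto_const LIMSEQ_inverse_real_of_nat, of B] by simp
  qed
  then obtain r v where vl: "(\<lambda>k. w (r k)) \<longlonglongrightarrow> v" and vK: "v - C v = 0"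
    using sub_conv[OF bw] by blast
  have ge: "1 \<le> norm (w k - v)" for k
  proof -
    let ?t = "norm (z (m k))"
    have "scaleR ?t v - C (scaleR ?t v) = 0" using vK by (simp add: C_scaleR scaleR_diff_right[symmetric])
    then have "?t \<le> norm (z (m k) - scaleR ?t v)" by (rule Kz)
    also have "z (m k) - scaleR ?t v = scaleR ?t (w k - v)"
      using pz[of k] by (simp add: w_def scaleR_diff_right)
    also have "norm \<dots> = ?t * norm (w k - v)" using pz[of k] by simp
    finally show ?thesis using pz[of k] by simp
  qed
  obtain N where "\<forall>k\<ge>N. norm (w (r k) - v) < 1"
    using LIMSEQ_D[OF vl, of 1] by auto
  then show False using ge[of "r N"] by auto
qed

end

theorem lemma2p4:
  fixes act :: "'e::{cplx_normed_vector,banach} \<Rightarrow> 'a::cstar_algebra \<Rightarrow> 'e"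
    and inn :: "'e \<Rightarrow> 'e \<Rightarrow> 'a"
    and C :: "'e \<Rightarrow> 'e"
  assumes "hilbert_module act inn"
    and "property_H inn"
    and "compact_op act inn C"
  shows "(\<forall>y\<in>closure (range (\<lambda>x. x - C x)).
            \<exists>x u. (\<forall>n. u n \<in> {v. v - C v = 0}) \<and>
                  (\<lambda>n. x n - C (x n)) \<longlonglongrightarrow> y \<and>
                  (\<forall>n. norm (x n - u n) = (INF v\<in>{v. v - C v = 0}. norm (x n - v))))
       \<and> (\<forall>(x::nat \<Rightarrow> 'e) u y. y \<in> closure (range (\<lambda>x. x - C x)) \<and>
            (\<forall>n. u n \<in> {v. v - C v = 0}) \<and>
            (\<lambda>n. x n - C (x n)) \<longlonglongrightarrow> y \<and>
            (\<forall>n. norm (x n - u n) = (INF v\<in>{v. v - C v = 0}. norm (x n - v)))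
            \<longrightarrow> bounded (range (\<lambda>n. x n - u n)))"
proof -
  obtain S where S: "\<And>x y. inn (C x) y = inn x (S y)"
    using assms(3) unfolding compact_op_def adjointable_def by blast
  interpret hm_main act inn C S
    by unfold_locales (simp_all only: assms S)
  show ?thesis using part1 part2 by blast
qed



end
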